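(* Consider the discrete-time control system on $\mathrm{Aff}(2,\mathbb{R})$ given by $(x_{k+1},y_{k+1})=f_{u_k}(x_k,y_k)$, $u_k\in U$, where $f_u(x,y)=(h(u)x,\ a(x-1)+dy+g(u)x)$ with $a\in\mathbb{R}$, $d\in\mathbb{R}\setminus\{0\}$, $h:\mathbb{R}^m\to(0,\infty)$ and $g:\mathbb{R}^m\to\mathbb{R}$ smooth with $h(0)=1$, $g(0)=0$, and $U\subset\mathbb{R}^m$ a compact convex neighborhood of $0$. If $-a\,h'(0)\neq g'(0)(d-1)$ and $h'(0)\neq0$, then the system is accessible.
   Context: $\mathrm{Aff}(2,\mathbb{R})$ is $(0,\infty)\times\mathbb{R}$ with product $(x_1,y_1)\cdot(x_2,y_2)=(x_1x_2,\ y_2+x_2y_1)$. Solutions: $\varphi(0,p,u)=p$, $\varphi(k,p,u)=f_{u_{k-1}}\circ\cdots\circ f_{u_0}(p)$ for controls $u=(u_i)\in U^{\mathbb{N}_0}$. For a point $p$, $\mathcal{R}(p)=\bigcup_{k\in\mathbb{N}}\{\varphi(k,p,u)\}$ and $\mathcal{C}(p)=\bigcup_{k\in\mathbb{N}}\{q:\varphi(k,q,u)=p\text{ for some }u\}$. The system is forward accessible if $\mathrm{int}\,\mathcal{R}(p)\neq\emptyset$ for all $p$, backward accessible if $\mathrm{int}\,\mathcal{C}(p)\neq\emptyset$ for all $p$, and accessible if both hold. $h'(0)$, $g'(0)$ are the derivatives at $0$. *)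

theory Defs
  imports "HOL-Analysis.Analysis"
begin

fun Ck_fun :: "nat \<Rightarrow> ('a::euclidean_space \<Rightarrow> real) \<Rightarrow> bool" where
  "Ck_fun 0 f = continuous_on UNIV f"
| "Ck_fun (Suc k) f =
     ((\<forall>x. f differentiable (at x)) \<and>
      (\<forall>i\<in>Basis. Ck_fun k (\<lambda>x. frechet_derivative f (at x) i)))"

definition smooth_fun :: "('a::euclidean_space \<Rightarrow> real) \<Rightarrow> bool" where
  "smooth_fun f \<longleftrightarrow> (\<forall>k. Ck_fun k f)"

text \<open>The group Aff(2,R) as the state space (0,infinity) x R.\<close>
definition Aff2 :: "(real \<times> real) set" where
  "Aff2 = {p. fst p > 0}"

fun sol :: "('u \<Rightarrow> 's \<Rightarrow> 's) \<Rightarrow> nat \<Rightarrow> 's \<Rightarrow> (nat \<Rightarrow> 'u) \<Rightarrow> 's" where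
  "sol f 0 p u = p"
| "sol f (Suc k) p u = f (u k) (sol f k p u)"

definition reach_set :: "('u \<Rightarrow> 's \<Rightarrow> 's) \<Rightarrow> 'u set \<Rightarrow> 's \<Rightarrow> 's set" where
  "reach_set f U p = {sol f k p u | k u. k \<ge> 1 \<and> (\<forall>i. u i \<in> U)}"

definition ctrl_set :: "('u \<Rightarrow> 's \<Rightarrow> 's) \<Rightarrow> 'u set \<Rightarrow> 's set \<Rightarrow> 's \<Rightarrow> 's set" where
  "ctrl_set f U M p = {q \<in> M. \<exists>k u. k \<ge> 1 \<and> (\<forall>i. u i \<in> U) \<and> sol f k q u = p}"

definition forward_accessible ::
  "('u \<Rightarrow> 's::topological_space \<Rightarrow> 's) \<Rightarrow> 'u set \<Rightarrow> 's set \<Rightarrow> bool" where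
  "forward_accessible f U M \<longleftrightarrow> (\<forall>p\<in>M. interior (reach_set f U p) \<noteq> {})"

definition backward_accessible ::
  "('u \<Rightarrow> 's::topological_space \<Rightarrow> 's) \<Rightarrow> 'u set \<Rightarrow> 's set \<Rightarrow> bool" where
  "backward_accessible f U M \<longleftrightarrow> (\<forall>p\<in>M. interior (ctrl_set f U M p) \<noteq> {})"

definition accessible ::
  "('u \<Rightarrow> 's::topological_space \<Rightarrow> 's) \<Rightarrow> 'u set \<Rightarrow> 's set \<Rightarrow> bool" where
  "accessible f U M \<longleftrightarrow> forward_accessible f U M \<and> backward_accessible f U M"

definition aff_sys ::
  "real \<Rightarrow> real \<Rightarrow> ('u \<Rightarrow> real) \<Rightarrow> ('u \<Rightarrow> real) \<Rightarrow> 'u \<Rightarrow> real \<times> real \<Rightarrow> real \<times> real" where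
  "aff_sys a d h g u p = (h u * fst p, a * (fst p - 1) + d * snd p + g u * fst p)"

end

theory Submission
  imports Defs
begin

lemma open_map_lemma:
  fixes F :: "real\<times>real \<Rightarrow> real\<times>real"
  assumes "continuous_on UNIV F"
    "(F has_derivative (\<lambda>z. (A* fst z + B* snd z, C* fst z + D* snd z))) (at 0)"
    "A*D - B*C \<noteq> 0" "0 \<in> interior T"
  shows "F 0 \<in> interior (F ` T)"
proof -
  define c1 where "c1 = D/(A*D-B*C)"
  define c2 where "c2 = B/(A*D-B*C)"
  define c3 where "c3 = A/(A*D-B*C)"
  define c4 where "c4 = C/(A*D-B*C)"
  define g' where "g' = (\<lambda>z::real\<times>real. ((D* fst z - B* snd z)/(A*D-B*C), (A* snd z - C* fst z)/(A*D-B*C)))"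
  have geq: "g' = (\<lambda>z::real\<times>real. (c1 * fst z - c2 * snd z, c3 * snd z - c4 * fst z))"
    by (auto simp: g'_def c1_def c2_def c3_def c4_def fun_eq_iff diff_divide_distrib)
  have "linear g'" unfolding geq
    by (intro linearI) (auto simp: algebra_simps)
  then have bl: "bounded_linear g'" by (simp add: linear_conv_bounded_linear)
  have id: "(\<lambda>z. (A* fst z + B* snd z, C* fst z + D* snd z)) \<circ> g' = id"
  proof (rule ext)
    fix z :: "real\<times>real"
    obtain p q where z: "z = (p,q)" by fastforce
    let ?E = "A*D-B*C"
    have "A*((D*p - B*q)/?E) + B*((A*q - C*p)/?E) = (A*(D*p - B*q) + B*(A*q - C*p))/?E"
      by (simp add: add_divide_distrib)
    also have "A*(D*p - B*q) + B*(A*q - C*p) = ?E*p" by (simp add: algebra_simps)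
    finally have e1: "A*((D*p - B*q)/?E) + B*((A*q - C*p)/?E) = p" using assms(3) by simp
    have "C*((D*p - B*q)/?E) + D*((A*q - C*p)/?E) = (C*(D*p - B*q) + D*(A*q - C*p))/?E"
      by (simp add: add_divide_distrib)
    also have "C*(D*p - B*q) + D*(A*q - C*p) = ?E*q" by (simp add: algebra_simps)
    finally have e2: "C*((D*p - B*q)/?E) + D*((A*q - C*p)/?E) = q" using assms(3) by simp
    show "((\<lambda>z. (A * fst z + B * snd z, C * fst z + D * snd z)) \<circ> g') z = id z"
      using e1 e2 by (simp add: z g'_def)
  qed
  show ?thesis
    by (rule sussmann_open_mapping[OF open_UNIV assms(1) _ assms(2) bl id _ assms(4)]) auto
qed

lemma pick_v:
  fixes h' g' :: "'a::real_vector \<Rightarrow> real"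
  assumes "linear h'" "linear g'" "(\<lambda>v. - a * h' v) \<noteq> (\<lambda>v. g' v * (d - 1))" "h' \<noteq> (\<lambda>v. 0)"
  shows "\<exists>v. h' v \<noteq> 0 \<and> a * h' v + (d-1) * g' v \<noteq> 0"
proof -
  obtain w1 where w1: "h' w1 \<noteq> 0" using assms(4) by auto
  obtain w2 where "- a * h' w2 \<noteq> g' w2 * (d - 1)" using assms(3) by (auto simp: fun_eq_iff)
  then have w2: "a * h' w2 + (d-1) * g' w2 \<noteq> 0" by (auto simp: algebra_simps)
  show ?thesis
  proof (cases "h' w2 = 0")
    case False then show ?thesis using w2 by blast
  next
    case True
    show ?thesis
    proof (cases "a * h' w1 + (d-1) * g' w1 = 0")
      case False then show ?thesis using w1 by blast
    next
      case c: True
      have "h' (w1+w2) = h' w1 + h' w2" "g' (w1+w2) = g' w1 + g' w2"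
        using assms(1,2) by (simp_all add: linear_add)
      then have "a * h' (w1+w2) + (d-1) * g' (w1+w2) = (a * h' w1 + (d-1) * g' w1) + (a * h' w2 + (d-1) * g' w2)"
        by (simp add: algebra_simps)
      then show ?thesis using True c w1 w2 \<open>h' (w1+w2) = h' w1 + h' w2\<close>
        by (intro exI[of _ "w1+w2"]) simp
    qed
  qed
qed
lemma hd_fst:
  assumes "(H has_real_derivative \<alpha>) (at 0)" "(\<lambda>z. \<alpha> * fst z) = f'"
  shows "((\<lambda>z::real\<times>real. H (fst z)) has_derivative f') (at 0)"
proof -
  have "(H has_derivative (\<lambda>x. \<alpha> * x)) (at (fst (0::real\<times>real)))"
    using assms(1) by (simp add: has_field_derivative_def)
  from diff_chain_at[OF has_derivative_fst[OF has_derivative_ident] this]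
  show ?thesis using assms(2) by (simp add: o_def mult.commute)
qed

lemma hd_snd:
  assumes "(H has_real_derivative \<alpha>) (at 0)" "(\<lambda>z. \<alpha> * snd z) = f'"
  shows "((\<lambda>z::real\<times>real. H (snd z)) has_derivative f') (at 0)"
proof -
  have "(H has_derivative (\<lambda>x. \<alpha> * x)) (at (snd (0::real\<times>real)))"
    using assms(1) by (simp add: has_field_derivative_def)
  from diff_chain_at[OF has_derivative_snd[OF has_derivative_ident] this]
  show ?thesis using assms(2) by (simp add: o_def mult.commute)
qed

lemma forward_part:
  fixes H G :: "real \<Rightarrow> real"
  assumes cH: "continuous_on UNIV H" and cG: "continuous_on UNIV G"
    and H0: "H 0 = 1" and G0: "G 0 = 0"
    and dH: "(H has_real_derivative \<alpha>) (at 0)" and dG: "(G has_real_derivative \<beta>) (at 0)"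
    and nz: "\<alpha> \<noteq> 0" "a * \<alpha> + (d-1) * \<beta> \<noteq> 0" and x0: "x0 \<noteq> 0"
    and T: "0 \<in> interior T"
  shows "interior ((\<lambda>z. (H (snd z) * (H (fst z) * x0),
      a * (H (fst z) * x0 - 1) + d * (a * (x0 - 1) + d * y0 + G (fst z) * x0) + G (snd z) * (H (fst z) * x0))) ` T) \<noteq> {}"
proof -
  define F where "F = (\<lambda>z::real\<times>real. (H (snd z) * (H (fst z) * x0),
      a * (H (fst z) * x0 - 1) + d * (a * (x0 - 1) + d * y0 + G (fst z) * x0) + G (snd z) * (H (fst z) * x0)))"
  have c: "continuous_on UNIV F" unfolding F_def
    by (intro continuous_intros continuous_on_compose2[OF cH] continuous_on_compose2[OF cG]) auto
  have d: "(F has_derivative (\<lambda>z. ((\<alpha>*x0) * fst z + (\<alpha>*x0) * snd z, (x0*(a*\<alpha>+d*\<beta>)) * fst z + (\<beta>*x0) * snd z))) (at 0)"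
    unfolding F_def
    by (rule derivative_eq_intros hd_fst[OF dH] hd_snd[OF dH] hd_fst[OF dG] hd_snd[OF dG] refl)+
       (simp add: fun_eq_iff H0 G0 algebra_simps)
  have det: "(\<alpha>*x0) * (\<beta>*x0) - (\<alpha>*x0) * (x0*(a*\<alpha>+d*\<beta>)) \<noteq> 0"
  proof -
    have "(\<alpha>*x0) * (\<beta>*x0) - (\<alpha>*x0) * (x0*(a*\<alpha>+d*\<beta>)) = - (\<alpha> * (x0*x0) * (a * \<alpha> + (d-1) * \<beta>))"
      by (simp add: algebra_simps)
    then show ?thesis using nz x0 by simp
  qed
  from open_map_lemma[OF c d det T] have "F 0 \<in> interior (F ` T)" .
  then show ?thesis unfolding F_def by blast
qed
lemma backward_part:
  fixes H G :: "real \<Rightarrow> real"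
  assumes cH: "continuous_on UNIV H" and cG: "continuous_on UNIV G" and Hpos: "\<forall>t. H t > 0"
    and H0: "H 0 = 1" and G0: "G 0 = 0"
    and dH: "(H has_real_derivative \<alpha>) (at 0)" and dG: "(G has_real_derivative \<beta>) (at 0)"
    and nz: "\<alpha> \<noteq> 0" "a * \<alpha> + (d-1) * \<beta> \<noteq> 0" and X: "X \<noteq> 0" and dnz: "d \<noteq> 0"
    and T: "0 \<in> interior T"
  shows "interior ((\<lambda>z. (X / H (snd z) / H (fst z),
      ((Y - a * (X / H (snd z) - 1) - G (snd z) * (X / H (snd z))) / d
         - a * (X / H (snd z) / H (fst z) - 1) - G (fst z) * (X / H (snd z) / H (fst z))) / d)) ` T) \<noteq> {}"
proof -
  define F where "F = (\<lambda>z::real\<times>real. (X / H (snd z) / H (fst z),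
      ((Y - a * (X / H (snd z) - 1) - G (snd z) * (X / H (snd z))) / d
         - a * (X / H (snd z) / H (fst z) - 1) - G (fst z) * (X / H (snd z) / H (fst z))) / d))"
  have Hnz: "\<And>t. H t \<noteq> 0" using Hpos by (metis less_irrefl)
  have c: "continuous_on UNIV F" unfolding F_def
    by (intro continuous_intros continuous_on_compose2[OF cH] continuous_on_compose2[OF cG]) (auto simp: Hnz dnz)
  have d: "(F has_derivative (\<lambda>z. ((-X*\<alpha>) * fst z + (-X*\<alpha>) * snd z,
       (X*(a*\<alpha>-\<beta>)/d) * fst z + ((X*(a*\<alpha>-\<beta>)/d + a*X*\<alpha>)/d) * snd z))) (at 0)"
    unfolding F_def
    apply (rule derivative_eq_intros hd_fst[OF dH] hd_snd[OF dH] hd_fst[OF dG] hd_snd[OF dG] refl | (simp add: H0 G0 dnz; fail))+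
    apply (simp add: fun_eq_iff field_simps H0 G0 dnz)
    done
  have det: "(-X*\<alpha>) * ((X*(a*\<alpha>-\<beta>)/d + a*X*\<alpha>)/d) - (-X*\<alpha>) * (X*(a*\<alpha>-\<beta>)/d) \<noteq> 0"
  proof -
    have "(-X*\<alpha>) * ((X*(a*\<alpha>-\<beta>)/d + a*X*\<alpha>)/d) - (-X*\<alpha>) * (X*(a*\<alpha>-\<beta>)/d) = - (\<alpha> * (X*X) * (a * \<alpha> + (d-1) * \<beta>)) / (d*d)"
      using dnz by (simp add: field_simps)
    then show ?thesis using nz X dnz by simp
  qed
  from open_map_lemma[OF c d det T] have "F 0 \<in> interior (F ` T)" .
  then show ?thesis unfolding F_def by blast
qed
theorem proposition3p6:
  fixes a d :: real
    and h g :: "real ^ 'm \<Rightarrow> real"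
    and h' g' :: "real ^ 'm \<Rightarrow> real"
    and U :: "(real ^ 'm) set"
  assumes "d \<noteq> 0"
    and "\<forall>v. h v > 0"
    and "smooth_fun h" and "smooth_fun g"
    and "h 0 = 1" and "g 0 = 0"
    and "compact U" and "convex U" and "0 \<in> interior U"
    and "(h has_derivative h') (at 0)"
    and "(g has_derivative g') (at 0)"
    and "(\<lambda>v. - a * h' v) \<noteq> (\<lambda>v. g' v * (d - 1))"
    and "h' \<noteq> (\<lambda>v. 0)"
  shows "accessible (aff_sys a d h g) U Aff2"
proof -
  note dnz = assms(1)
  have lh: "linear h'" using assms(10) by (auto dest: has_derivative_bounded_linear bounded_linear.linear)
  have lg: "linear g'" using assms(11) by (auto dest: has_derivative_bounded_linear bounded_linear.linear)
  obtain v where v: "h' v \<noteq> 0" "a * h' v + (d-1) * g' v \<noteq> 0"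
    using pick_v[OF lh lg assms(12,13)] by blast
  have ch: "continuous_on UNIV h" using assms(3) unfolding smooth_fun_def by (metis Ck_fun.simps(1))
  have cg: "continuous_on UNIV g" using assms(4) unfolding smooth_fun_def by (metis Ck_fun.simps(1))
  define H where "H = (\<lambda>t::real. h (t *\<^sub>R v))"
  define G where "G = (\<lambda>t::real. g (t *\<^sub>R v))"
  have cH: "continuous_on UNIV H" unfolding H_def
    by (intro continuous_on_compose2[OF ch] continuous_intros) auto
  have cG: "continuous_on UNIV G" unfolding G_def
    by (intro continuous_on_compose2[OF cg] continuous_intros) auto
  have dH: "(H has_real_derivative h' v) (at 0)"
  proof -
    have "(h has_derivative h') (at ((\<lambda>t::real. t *\<^sub>R v) 0))" using assms(10) by simp
    from diff_chain_at[OF has_derivative_scaleR_left[OF has_derivative_ident] this]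
    have "((h \<circ> (\<lambda>t. t *\<^sub>R v)) has_derivative (h' \<circ> (\<lambda>t. t *\<^sub>R v))) (at 0)" by simp
    moreover have "h' \<circ> (\<lambda>t. t *\<^sub>R v) = (*) (h' v)"
      using lh by (auto simp: fun_eq_iff linear_scale)
    ultimately show ?thesis unfolding has_field_derivative_def H_def by (simp add: o_def)
  qed
  have dG: "(G has_real_derivative g' v) (at 0)"
  proof -
    have "(g has_derivative g') (at ((\<lambda>t::real. t *\<^sub>R v) 0))" using assms(11) by simp
    from diff_chain_at[OF has_derivative_scaleR_left[OF has_derivative_ident] this]
    have "((g \<circ> (\<lambda>t. t *\<^sub>R v)) has_derivative (g' \<circ> (\<lambda>t. t *\<^sub>R v))) (at 0)" by simp
    moreover have "g' \<circ> (\<lambda>t. t *\<^sub>R v) = (*) (g' v)"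
      using lg by (auto simp: fun_eq_iff linear_scale)
    ultimately show ?thesis unfolding has_field_derivative_def G_def by (simp add: o_def)
  qed
  have Hpos: "\<forall>t. H t > 0" using assms(2) by (simp add: H_def)
  have H0: "H 0 = 1" using assms(5) by (simp add: H_def)
  have G0: "G 0 = 0" using assms(6) by (simp add: G_def)
  define T where "T = {z::real\<times>real. fst z *\<^sub>R v \<in> U \<and> snd z *\<^sub>R v \<in> U}"
  have T: "0 \<in> interior T"
  proof -
    define T' where "T' = (\<lambda>z::real\<times>real. fst z *\<^sub>R v) -` interior U \<inter> (\<lambda>z::real\<times>real. snd z *\<^sub>R v) -` interior U"
    have "open T'" unfolding T'_def
      by (intro open_Int continuous_open_vimage open_interior continuous_intros)
    moreover have "0 \<in> T'" using assms(9) by (simp add: T'_def)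
    moreover have "T' \<subseteq> T" unfolding T'_def T_def using interior_subset by blast
    ultimately show ?thesis by (meson interior_maximal subsetD)
  qed
  define uu where "uu = (\<lambda>z::real\<times>real. \<lambda>i::nat. if i = 0 then fst z *\<^sub>R v else snd z *\<^sub>R v)"
  have uuU: "\<And>z i. z \<in> T \<Longrightarrow> uu z i \<in> U" by (simp add: uu_def T_def)
  have sol2: "\<And>z q. sol (aff_sys a d h g) 2 q (uu z) = aff_sys a d h g (snd z *\<^sub>R v) (aff_sys a d h g (fst z *\<^sub>R v) q)"
    by (simp add: numeral_2_eq_2 uu_def)
  have fwd: "forward_accessible (aff_sys a d h g) U Aff2"
    unfolding forward_accessible_def
  proof
    fix p assume "p \<in> Aff2"
    then obtain x0 y0 where p: "p = (x0, y0)" "x0 > 0" by (cases p) (auto simp: Aff2_def)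
    define F where "F = (\<lambda>z. (H (snd z) * (H (fst z) * x0),
      a * (H (fst z) * x0 - 1) + d * (a * (x0 - 1) + d * y0 + G (fst z) * x0) + G (snd z) * (H (fst z) * x0)))"
    have ne: "interior (F ` T) \<noteq> {}" unfolding F_def
      by (rule forward_part[OF cH cG H0 G0 dH dG v _ T]) (use p in simp)
    have "F ` T \<subseteq> reach_set (aff_sys a d h g) U p"
    proof
      fix w assume "w \<in> F ` T"
      then obtain z where z: "z \<in> T" "w = F z" by blast
      have "w = sol (aff_sys a d h g) 2 p (uu z)"
        unfolding sol2 z p by (simp add: F_def aff_sys_def H_def G_def algebra_simps)
      then show "w \<in> reach_set (aff_sys a d h g) U p"
        unfolding reach_set_def using uuU[OF z(1)] by force
    qed
    then show "interior (reach_set (aff_sys a d h g) U p) \<noteq> {}"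
      using ne interior_mono by blast
  qed
  have bwd: "backward_accessible (aff_sys a d h g) U Aff2"
    unfolding backward_accessible_def
  proof
    fix p assume "p \<in> Aff2"
    then obtain X Y where p: "p = (X, Y)" "X > 0" by (cases p) (auto simp: Aff2_def)
    define F where "F = (\<lambda>z. (X / H (snd z) / H (fst z),
      ((Y - a * (X / H (snd z) - 1) - G (snd z) * (X / H (snd z))) / d
         - a * (X / H (snd z) / H (fst z) - 1) - G (fst z) * (X / H (snd z) / H (fst z))) / d))"
    have ne: "interior (F ` T) \<noteq> {}" unfolding F_def
      by (rule backward_part[OF cH cG Hpos H0 G0 dH dG v _ dnz T]) (use p in simp)
    have "F ` T \<subseteq> ctrl_set (aff_sys a d h g) U Aff2 p"
    proof
      fix w assume "w \<in> F ` T"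
      then obtain z where z: "z \<in> T" "w = F z" by blast
      have h1: "H (fst z) > 0" "H (snd z) > 0" using Hpos by auto
      have wA: "w \<in> Aff2" using h1 p(2) by (simp add: z F_def Aff2_def)
      have ws: "sol (aff_sys a d h g) 2 w (uu z) = p"
      proof -
        have hH: "h (fst z *\<^sub>R v) = H (fst z)" "h (snd z *\<^sub>R v) = H (snd z)"
          by (simp_all add: H_def)
        have gG: "g (fst z *\<^sub>R v) = G (fst z)" "g (snd z *\<^sub>R v) = G (snd z)"
          by (simp_all add: G_def)
        show ?thesis
          unfolding sol2 z p using h1 dnz
          by (simp add: F_def aff_sys_def hH gG field_simps)
      qed
      have two: "1 \<le> (2::nat)" by simp
      show "w \<in> ctrl_set (aff_sys a d h g) U Aff2 p"
        unfolding ctrl_set_def using uuU[OF z(1)] wA ws two by blast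
    qed
    then show "interior (ctrl_set (aff_sys a d h g) U Aff2 p) \<noteq> {}"
      using ne interior_mono by blast
  qed
  show ?thesis using fwd bwd by (simp add: accessible_def)
qed
end
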